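(* Let $G$ be a finite, simple, connected, triangle-free cubic graph. If $G$ has a bridge, then for every valid labeling $\Lambda$ of $\mathfrak{L}_2(G)$ there is a reduced clique $\mathbb{X}\in\mathcal{X}$ which is a Type A self-intersection of some cycle in $\Gamma_\Lambda$.
   Context: $\mathcal{L}(H)$ is the line graph of $H$. Let $\mathcal{T}$ be the set of triangles of $\mathcal{L}(\mathcal{L}(G))$ formed by the three edges of a triangle of $\mathcal{L}(G)$. $\mathfrak{L}_2(G)$ has the vertex set of $\mathcal{L}(\mathcal{L}(G))$ and the edges of $\mathcal{L}(\mathcal{L}(G))$ not in any triangle of $\mathcal{T}$. For each edge $e$ of $G$, the reduced clique $\mathbb{X}_e$ is the subgraph of $\mathfrak{L}_2(G)$ on the four edges of $\mathcal{L}(G)$ incident to $e$, with all edges of $\mathfrak{L}_2(G)$ among them; it is a 4-cycle. $\mathcal{X}$ is the set of reduced cliques. A labeling $\Lambda$ gives each edge of $\mathfrak{L}_2(G)$ a label in $\{0,1\}$ ($1$ = open); it is valid if in every reduced clique each vertex is incident to two edges of that clique with different labels. $\Gamma_\Lambda$ is the set of connected components (cycles) of the subgraph formed by open edges. $\mathbb{X}$ is a self-intersection of $\gamma\in\Gamma_\Lambda$ if both open edges of $\mathbb{X}$ lie on $\gamma$. Writing $\mathbb{X}$ as the 4-cycle $(x_1,x_2,x_3,x_4)$ with open edges $x_1x_2,x_3x_4$, deleting them from $\gamma$ leaves two vertex-disjoint paths with endpoints $x_1,\dots,x_4$; the self-intersection is of Type A if these paths connect $x_1$ with $x_3$ and $x_2$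 with $x_4$ (and of Type B if they connect $x_2$ with $x_3$ and $x_4$ with $x_1$). *)

theory Defs
  imports Main
begin

definition simple_graph :: "'a set \<Rightarrow> 'a set set \<Rightarrow> bool" where
  "simple_graph V E \<longleftrightarrow> (\<forall>e\<in>E. \<exists>u v. u \<in> V \<and> v \<in> V \<and> u \<noteq> v \<and> e = {u, v})"

definition reach :: "'a set set \<Rightarrow> 'a \<Rightarrow> 'a \<Rightarrow> bool" where
  "reach F = (\<lambda>x y. {x, y} \<in> F)\<^sup>*\<^sup>*"

definition connected_graph :: "'a set \<Rightarrow> 'a set set \<Rightarrow> bool" where
  "connected_graph V E \<longleftrightarrow> V \<noteq> {} \<and> (\<forall>u\<in>V. \<forall>v\<in>V. reach E u v)"

definition degree :: "'a set set \<Rightarrow> 'a \<Rightarrow> nat" where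
  "degree E v = card {e \<in> E. v \<in> e}"

definition cubic :: "'a set \<Rightarrow> 'a set set \<Rightarrow> bool" where
  "cubic V E \<longleftrightarrow> (\<forall>v\<in>V. degree E v = 3)"

definition triangle_free :: "'a set set \<Rightarrow> bool" where
  "triangle_free E \<longleftrightarrow> \<not> (\<exists>u v w. {u, v} \<in> E \<and> {v, w} \<in> E \<and> {u, w} \<in> E)"

definition is_bridge :: "'a set set \<Rightarrow> 'a set \<Rightarrow> bool" where
  "is_bridge E b \<longleftrightarrow> b \<in> E \<and> (\<forall>u v. b = {u, v} \<longrightarrow> \<not> reach (E - {b}) u v)"

text \<open>Edge set of the line graph (its vertex set is the edge set E itself).\<close>
definition line_edges :: "'a set set \<Rightarrow> 'a set set set" where
  "line_edges E = {{e, f} | e f. e \<in> E \<and> f \<in> E \<and> e \<noteq> f \<and> e \<inter> f \<noteq> {}}"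

text \<open>Edges of L2(G): edges of L(L(G)) not lying in a triangle of L(L(G)) formed
  by the three edges of a triangle {e1,e2,e3} of L(G).\<close>
definition l2_edges :: "'a set set \<Rightarrow> 'a set set set set" where
  "l2_edges E = {d \<in> line_edges (line_edges E).
     \<not> (\<exists>e1 e2 e3. {e1, e2} \<in> line_edges E \<and> {e2, e3} \<in> line_edges E \<and>
                   {e1, e3} \<in> line_edges E \<and> d \<subseteq> {{e1, e2}, {e2, e3}, {e1, e3}})}"

text \<open>Reduced clique X_e: vertices are the edges of L(G) incident to e,
  edges are all L2(G)-edges among them.\<close>
definition rc_verts :: "'a set set \<Rightarrow> 'a set \<Rightarrow> 'a set set set" where
  "rc_verts E e = {l \<in> line_edges E. e \<in> l}"

definition rc_edges :: "'a set set \<Rightarrow> 'a set \<Rightarrow> 'a set set set set" where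
  "rc_edges E e = {d \<in> l2_edges E. d \<subseteq> rc_verts E e}"

text \<open>Labelings: True = label 1 = open, False = label 0.\<close>
definition valid_labeling :: "'a set set \<Rightarrow> ('a set set set \<Rightarrow> bool) \<Rightarrow> bool" where
  "valid_labeling E \<Lambda> \<longleftrightarrow>
     (\<forall>e\<in>E. \<forall>x\<in>rc_verts E e. \<exists>d1\<in>rc_edges E e. \<exists>d2\<in>rc_edges E e.
         x \<in> d1 \<and> x \<in> d2 \<and> \<Lambda> d1 \<noteq> \<Lambda> d2)"

definition open_edges :: "'a set set \<Rightarrow> ('a set set set \<Rightarrow> bool) \<Rightarrow> 'a set set set set" where
  "open_edges E \<Lambda> = {d \<in> l2_edges E. \<Lambda> d}"

text \<open>Connected components (given by their edge sets) of the graph with edge set F.\<close>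
definition components :: "'a set set \<Rightarrow> 'a set set set" where
  "components F = {{d \<in> F. \<exists>w\<in>d. reach F v w} | v. \<exists>d\<in>F. v \<in> d}"

definition Gamma :: "'a set set \<Rightarrow> ('a set set set \<Rightarrow> bool) \<Rightarrow> 'a set set set set set" where
  "Gamma E \<Lambda> = components (open_edges E \<Lambda>)"

text \<open>X_e, written as the 4-cycle (x1,x2,x3,x4) with open edges x1x2 and x3x4,
  is a Type A self-intersection of the cycle \<gamma>: both open edges lie on \<gamma>, and
  deleting them from \<gamma> leaves paths joining x1 with x3 and x2 with x4.\<close>
definition typeA_self_intersection ::
  "'a set set \<Rightarrow> ('a set set set \<Rightarrow> bool) \<Rightarrow> 'a set \<Rightarrow> 'a set set set set \<Rightarrow> bool" where
  "typeA_self_intersection E \<Lambda> e \<gamma> \<longleftrightarrow>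
     (\<exists>x1 x2 x3 x4. distinct [x1, x2, x3, x4] \<and>
        rc_verts E e = {x1, x2, x3, x4} \<and>
        rc_edges E e = {{x1, x2}, {x2, x3}, {x3, x4}, {x4, x1}} \<and>
        \<Lambda> {x1, x2} \<and> \<Lambda> {x3, x4} \<and>
        {x1, x2} \<in> \<gamma> \<and> {x3, x4} \<in> \<gamma> \<and>
        reach (\<gamma> - {{x1, x2}, {x3, x4}}) x1 x3 \<and>
        reach (\<gamma> - {{x1, x2}, {x3, x4}}) x2 x4)"

end

theory Submission
  imports Defs
begin


definition dg :: "'b set set \<Rightarrow> 'b \<Rightarrow> nat" where
  "dg H y = card {d\<in>H. y\<in>d}"

lemma reach_step: "reach F x y \<Longrightarrow> {y,z} \<in> F \<Longrightarrow> reach F x z"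
  unfolding reach_def by (rule rtranclp.rtrancl_into_rtrancl)

lemma reach_refl: "reach F x x"
  unfolding reach_def by simp

lemma reach_trans: "reach F x y \<Longrightarrow> reach F y z \<Longrightarrow> reach F x z"
  unfolding reach_def by (rule rtranclp_trans)

lemma reach_mono: "reach F x y \<Longrightarrow> F \<subseteq> G \<Longrightarrow> reach G x y"
  unfolding reach_def by (induction rule: rtranclp_induct) (auto intro: rtranclp.rtrancl_into_rtrancl)

lemma reach_last: "reach F x y \<Longrightarrow> y \<noteq> x \<Longrightarrow> \<exists>d\<in>F. y \<in> d"
  unfolding reach_def by (induction rule: rtranclp_induct) auto

lemma card_filter_sum:
  assumes "finite A"
  shows "card {x\<in>A. P x} = (\<Sum>x\<in>A. if P x then 1 else (0::nat))"
proof -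
  have "{x\<in>A. P x} = A \<inter> {x. P x}" by auto
  then show ?thesis using assms by (simp add: sum.If_cases)
qed

lemma parity:
  fixes H :: "'b set set"
  assumes fin: "finite H" and two: "\<And>d. d \<in> H \<Longrightarrow> \<exists>a c. d = {a,c} \<and> a \<noteq> c"
    and odd: "odd (dg H z)"
  shows "\<exists>y. y \<noteq> z \<and> reach H z y \<and> odd (dg H y)"
proof (rule ccontr)
  assume nex: "\<not> ?thesis"
  define K where "K = {y. reach H z y}"
  have Ksub: "K \<subseteq> insert z (\<Union>H)"
    unfolding K_def using reach_last by fastforce
  have "finite (\<Union>H)" using fin two by (intro finite_Union) fastforce+
  then have finK: "finite K" using Ksub by (meson finite_insert finite_subset)
  have zK: "z \<in> K" unfolding K_def by (simp add: reach_refl)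
  have cl: "d \<subseteq> K" if h: "d \<in> H" "y \<in> d" "y \<in> K" for d y
  proof -
    obtain a c where dac: "d = {a,c}" using two h(1) by blast
    have "{a,c} \<in> H" "{c,a} \<in> H" using h(1) dac by (auto simp: insert_commute)
    then show ?thesis using h(2,3) dac unfolding K_def by (auto intro: reach_step)
  qed
  have eq: "(\<Sum>y\<in>K. dg H y) = (\<Sum>d\<in>H. card (d \<inter> K))"
  proof -
    have "(\<Sum>y\<in>K. dg H y) = (\<Sum>y\<in>K. \<Sum>d\<in>H. if y \<in> d then 1 else (0::nat))"
      unfolding dg_def using fin by (intro sum.cong refl card_filter_sum)
    also have "\<dots> = (\<Sum>d\<in>H. \<Sum>y\<in>K. if y \<in> d then 1 else (0::nat))"
      by (rule sum.swap)
    also have "\<dots> = (\<Sum>d\<in>H. card (d \<inter> K))"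
    proof (intro sum.cong refl)
      fix d assume "d \<in> H"
      have "d \<inter> K = {y\<in>K. y \<in> d}" by auto
      then show "(\<Sum>y\<in>K. if y \<in> d then 1 else (0::nat)) = card (d \<inter> K)"
        using finK card_filter_sum[of K "\<lambda>y. y \<in> d"] by simp
    qed
    finally show ?thesis .
  qed
  have "even (\<Sum>d\<in>H. card (d \<inter> K))"
  proof (rule dvd_sum)
    fix d assume dH: "d \<in> H"
    obtain a c where dac: "d = {a,c}" "a \<noteq> c" using two dH by blast
    show "even (card (d \<inter> K))"
    proof (cases "d \<inter> K = {}")
      case True then show ?thesis by simp
    next
      case False
      then have "d \<inter> K = d" using cl dH by blast
      moreover have "a \<noteq> c" by (rule dac(2))
      ultimately show ?thesis using dac(1) by simp
    qed
  qed
  moreover have "odd (\<Sum>y\<in>K. dg H y)"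
  proof -
    have "(\<Sum>y\<in>K. dg H y) = dg H z + (\<Sum>y\<in>K-{z}. dg H y)"
      using finK zK by (simp add: sum.remove)
    moreover have "even (\<Sum>y\<in>K-{z}. dg H y)"
      by (rule dvd_sum) (use nex in \<open>auto simp: K_def\<close>)
    ultimately show ?thesis using odd by simp
  qed
  ultimately show False using eq by simp
qed



lemma edge2: "simple_graph V E \<Longrightarrow> e \<in> E \<Longrightarrow> \<exists>p q. e = {p,q} \<and> p \<noteq> q \<and> p \<in> V \<and> q \<in> V"
  unfolding simple_graph_def by blast

lemma le_mem: "{a,b} \<in> line_edges E \<Longrightarrow> a \<noteq> b \<and> a \<inter> b \<noteq> {} \<and> a \<in> E \<and> b \<in> E"
  unfolding line_edges_def by (auto simp: doubleton_eq_iff)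

lemma le_intro: "a \<in> E \<Longrightarrow> b \<in> E \<Longrightarrow> a \<noteq> b \<Longrightarrow> a \<inter> b \<noteq> {} \<Longrightarrow> {a,b} \<in> line_edges E"
  unfolding line_edges_def by blast

lemma leE: "d \<in> line_edges F \<Longrightarrow> \<exists>a b. d = {a,b} \<and> a \<in> F \<and> b \<in> F \<and> a \<noteq> b \<and> a \<inter> b \<noteq> {}"
  by (simp add: line_edges_def)

lemma pick_other: "x \<in> l \<Longrightarrow> l \<in> line_edges F \<Longrightarrow> \<exists>f. l = {x,f}"
proof -
  assume "x \<in> l" "l \<in> line_edges F"
  then obtain a b where ab: "l = {a,b}" using leE[of l F] by blast
  show ?thesis
  proof (cases "x = a")
    case True then show ?thesis using ab by blast
  next
    case False
    then have "x = b" using ab \<open>x \<in> l\<close> by simp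
    then have "l = {x,a}" using ab by (simp add: insert_commute)
    then show ?thesis by blast
  qed
qed

lemma l2_char:
  assumes "d \<in> l2_edges E"
  shows "\<exists>e f g. d = {{e,f},{e,g}} \<and> e \<in> E \<and> f \<in> E \<and> g \<in> E \<and> e \<noteq> f \<and> e \<noteq> g \<and> f \<noteq> g
     \<and> e \<inter> f \<noteq> {} \<and> e \<inter> g \<noteq> {} \<and> f \<inter> g = {}"
proof -
  from assms have d: "d \<in> line_edges (line_edges E)"
    and nt: "\<not> (\<exists>e1 e2 e3. {e1, e2} \<in> line_edges E \<and> {e2, e3} \<in> line_edges E \<and>
                   {e1, e3} \<in> line_edges E \<and> d \<subseteq> {{e1, e2}, {e2, e3}, {e1, e3}})"
    unfolding l2_edges_def by auto
  from leE[OF d] obtain l1 l2 where l: "d = {l1,l2}" "l1 \<in> line_edges E" "l2 \<in> line_edges E" "l1 \<noteq> l2" "l1 \<inter> l2 \<noteq> {}"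
    by blast
  then obtain x where x: "x \<in> l1" "x \<in> l2" by blast
  obtain f where f: "l1 = {x,f}" using pick_other[OF x(1) l(2)] by blast
  obtain g where g: "l2 = {x,g}" using pick_other[OF x(2) l(3)] by blast
  have A: "x \<noteq> f" "x \<inter> f \<noteq> {}" "x \<in> E" "f \<in> E" using le_mem l(2) f by blast+
  have B: "x \<noteq> g" "x \<inter> g \<noteq> {}" "g \<in> E" using le_mem l(3) g by blast+
  have fg: "f \<noteq> g" using l(4) f g by auto
  have "f \<inter> g = {}"
  proof (rule ccontr)
    assume "f \<inter> g \<noteq> {}"
    then have "{f,g} \<in> line_edges E" using fg A B by (intro le_intro) auto
    then show False using nt l(1) f g l(2,3) by blast
  qed
  then show ?thesis using A B fg l(1) f g by blast
qed

lemma l2_intro: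
  assumes "e \<in> E" "f \<in> E" "g \<in> E" "e \<noteq> f" "e \<noteq> g" "f \<noteq> g" "e \<inter> f \<noteq> {}" "e \<inter> g \<noteq> {}" "f \<inter> g = {}"
  shows "{{e,f},{e,g}} \<in> l2_edges E"
proof -
  have ef: "{e,f} \<in> line_edges E" and eg: "{e,g} \<in> line_edges E" using assms by (auto intro: le_intro)
  have ne: "{e,f} \<noteq> {e,g}" using assms by (auto simp: doubleton_eq_iff)
  have A: "{{e,f},{e,g}} \<in> line_edges (line_edges E)"
    by (rule le_intro[OF ef eg ne]) simp
  have B: "\<not> ({e1, e2} \<in> line_edges E \<and> {e2, e3} \<in> line_edges E \<and>
                   {e1, e3} \<in> line_edges E \<and> {{e,f},{e,g}} \<subseteq> {{e1, e2}, {e2, e3}, {e1, e3}})" for e1 e2 e3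
  proof
    assume h: "{e1, e2} \<in> line_edges E \<and> {e2, e3} \<in> line_edges E \<and>
                   {e1, e3} \<in> line_edges E \<and> {{e,f},{e,g}} \<subseteq> {{e1, e2}, {e2, e3}, {e1, e3}}"
    then have a12: "e1 \<inter> e2 \<noteq> {}" and a23: "e2 \<inter> e3 \<noteq> {}" and a13: "e1 \<inter> e3 \<noteq> {}"
      using le_mem[of e1 e2 E] le_mem[of e2 e3 E] le_mem[of e1 e3 E] by blast+
    from h have m1: "{e,f} \<in> {{e1, e2}, {e2, e3}, {e1, e3}}" and m2: "{e,g} \<in> {{e1, e2}, {e2, e3}, {e1, e3}}" by auto
    have "f \<in> {e1,e2,e3}"
    proof -
      have "f \<in> {e,f}" by simp
      then show ?thesis using m1 by blast
    qed
    moreover have "g \<in> {e1,e2,e3}"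
    proof -
      have "g \<in> {e,g}" by simp
      then show ?thesis using m2 by blast
    qed
    ultimately have "f \<inter> g \<noteq> {}" using a12 a23 a13 assms(6)
      by (simp only: insert_iff empty_iff) (metis Int_commute)
    then show False using assms(9) by simp
  qed
  have B': "\<not> (\<exists>e1 e2 e3. {e1, e2} \<in> line_edges E \<and> {e2, e3} \<in> line_edges E \<and>
                   {e1, e3} \<in> line_edges E \<and> {{e,f},{e,g}} \<subseteq> {{e1, e2}, {e2, e3}, {e1, e3}})"
  proof
    assume "\<exists>e1 e2 e3. {e1, e2} \<in> line_edges E \<and> {e2, e3} \<in> line_edges E \<and>
                   {e1, e3} \<in> line_edges E \<and> {{e,f},{e,g}} \<subseteq> {{e1, e2}, {e2, e3}, {e1, e3}}"
    then obtain e1 e2 e3 where "{e1, e2} \<in> line_edges E \<and> {e2, e3} \<in> line_edges E \<and>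
                   {e1, e3} \<in> line_edges E \<and> {{e,f},{e,g}} \<subseteq> {{e1, e2}, {e2, e3}, {e1, e3}}"
      by (elim exE)
    then show False using B[of e1 e2 e3] by (rule notE[rotated])
  qed
  show ?thesis unfolding l2_edges_def using A B' by (intro CollectI conjI)
qed

lemma N_char:
  assumes sg: "simple_graph V E" and tf: "triangle_free E"
    and e: "e \<in> E" "e = {p,q}" "p \<noteq> q" and f: "f \<in> E" "f \<noteq> e" "p \<in> f" and g: "g \<in> E"
  shows "(g \<noteq> e \<and> e \<inter> g \<noteq> {} \<and> f \<inter> g = {}) \<longleftrightarrow> (q \<in> g \<and> g \<noteq> e)"
proof
  assume "g \<noteq> e \<and> e \<inter> g \<noteq> {} \<and> f \<inter> g = {}"
  then show "q \<in> g \<and> g \<noteq> e" using e f by blast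
next
  assume h: "q \<in> g \<and> g \<noteq> e"
  obtain a b where fab: "f = {a,b}" "a \<noteq> b" using edge2[OF sg f(1)] by blast
  obtain a' where fa: "f = {p,a'}" using fab f(3) by auto
  obtain x where gx: "g = {q,x}" using edge2[OF sg g] h by auto
  have "a' \<noteq> q" using fa f(2) e(2) by auto
  have "x \<noteq> p" using gx h e(2) by auto
  have "x \<noteq> a'"
  proof
    assume "x = a'"
    then have "{p,a'} \<in> E" "{a',q} \<in> E" "{p,q} \<in> E" using fa f gx g e by (auto simp: insert_commute)
    then show False using tf unfolding triangle_free_def by blast
  qed
  have "p \<noteq> q" by (rule e(3))
  then have "f \<inter> g = {}" using fa gx \<open>a' \<noteq> q\<close> \<open>x \<noteq> p\<close> \<open>x \<noteq> a'\<close> by auto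
  then show "g \<noteq> e \<and> e \<inter> g \<noteq> {} \<and> f \<inter> g = {}" using h e by auto
qed

lemma rc_at:
  assumes sg: "simple_graph V E" and tf: "triangle_free E"
    and e: "e \<in> E" "e = {p,q}" "p \<noteq> q" and f: "f \<in> E" "f \<noteq> e" "p \<in> f"
  shows "{d \<in> rc_edges E e. {e,f} \<in> d} = (\<lambda>g. {{e,f},{e,g}}) ` ({g\<in>E. q \<in> g} - {e})"
proof
  show "{d \<in> rc_edges E e. {e,f} \<in> d} \<subseteq> (\<lambda>g. {{e,f},{e,g}}) ` ({g\<in>E. q \<in> g} - {e})"
  proof
    fix d assume "d \<in> {d \<in> rc_edges E e. {e,f} \<in> d}"
    then have d: "d \<in> l2_edges E" "d \<subseteq> rc_verts E e" "{e,f} \<in> d" unfolding rc_edges_def by auto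
    obtain e' f' g' where c: "d = {{e',f'},{e',g'}}" "e' \<in> E" "f' \<in> E" "g' \<in> E" "e' \<noteq> f'" "e' \<noteq> g'" "f' \<noteq> g'"
     "e' \<inter> f' \<noteq> {}" "e' \<inter> g' \<noteq> {}" "f' \<inter> g' = {}" using l2_char[OF d(1)] by blast
    have "e \<in> {e',f'}" "e \<in> {e',g'}" using d(2) c(1) unfolding rc_verts_def by auto
    then have ee: "e' = e" using c(10) e(2) by auto
    have "\<exists>g. d = {{e,f},{e,g}} \<and> g \<in> E \<and> g \<noteq> e \<and> e \<inter> g \<noteq> {} \<and> f \<inter> g = {}"
      using d(3) c ee by (auto simp: doubleton_eq_iff insert_commute Int_commute)
    then obtain g where g: "d = {{e,f},{e,g}}" "g \<in> E" "g \<noteq> e \<and> e \<inter> g \<noteq> {} \<and> f \<inter> g = {}" by blast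
    then have "q \<in> g \<and> g \<noteq> e" using N_char[OF sg tf e f g(2)] by blast
    then show "d \<in> (\<lambda>g. {{e,f},{e,g}}) ` ({g\<in>E. q \<in> g} - {e})" using g by blast
  qed
next
  show "(\<lambda>g. {{e,f},{e,g}}) ` ({g\<in>E. q \<in> g} - {e}) \<subseteq> {d \<in> rc_edges E e. {e,f} \<in> d}"
  proof
    fix d assume "d \<in> (\<lambda>g. {{e,f},{e,g}}) ` ({g\<in>E. q \<in> g} - {e})"
    then obtain g where g: "d = {{e,f},{e,g}}" "g \<in> E" "q \<in> g" "g \<noteq> e" by blast
    then have gg: "g \<noteq> e \<and> e \<inter> g \<noteq> {} \<and> f \<inter> g = {}" using N_char[OF sg tf e f g(2)] by blast
    then have fg: "f \<noteq> g" using f(3) by auto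
    have ef: "e \<inter> f \<noteq> {}" using e f by auto
    have "d \<in> l2_edges E" using g(1) l2_intro[OF e(1) f(1) g(2) f(2)[symmetric] _ fg ef] gg by auto
    moreover have "d \<subseteq> rc_verts E e" using g(1) gg ef e f g
      unfolding rc_verts_def by (auto intro!: le_intro)
    ultimately show "d \<in> {d \<in> rc_edges E e. {e,f} \<in> d}" unfolding rc_edges_def using g(1) by auto
  qed
qed

lemma rc_at_card:
  assumes sg: "simple_graph V E" and tf: "triangle_free E" and cu: "cubic V E"
    and e: "e \<in> E" "e = {p,q}" "p \<noteq> q" and f: "f \<in> E" "f \<noteq> e" "p \<in> f"
  shows "card {d \<in> rc_edges E e. {e,f} \<in> d} = 2"
proof -
  have qV: "q \<in> V" using edge2[OF sg e(1)] e(2) by (auto simp: doubleton_eq_iff)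
  have c3: "card {g\<in>E. q \<in> g} = 3" using cu qV unfolding cubic_def degree_def by blast
  then have "finite {g\<in>E. q \<in> g}" by (metis card.infinite zero_neq_numeral)
  then have c2: "card ({g\<in>E. q \<in> g} - {e}) = 2" using c3 e by (simp add: card_Diff_singleton)
  have "inj_on (\<lambda>g. {{e,f},{e,g}}) ({g\<in>E. q \<in> g} - {e})"
    by (rule inj_onI) (auto simp: doubleton_eq_iff)
  then show ?thesis using rc_at[OF sg tf e f] c2 by (simp add: card_image)
qed

lemma rc_at_card':
  assumes sg: "simple_graph V E" and tf: "triangle_free E" and cu: "cubic V E"
    and e: "e \<in> E" and f: "f \<in> E" "f \<noteq> e" "e \<inter> f \<noteq> {}"
  shows "card {d \<in> rc_edges E e. {e,f} \<in> d} = 2"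
proof -
  obtain p q where pq: "e = {p,q}" "p \<noteq> q" using edge2[OF sg e] by blast
  show ?thesis
  proof (cases "p \<in> f")
    case True then show ?thesis using rc_at_card[OF sg tf cu e pq f(1,2)] by blast
  next
    case False
    then have "q \<in> f" using f(3) pq by auto
    moreover have "e = {q,p}" "q \<noteq> p" using pq by auto
    ultimately show ?thesis using rc_at_card[OF sg tf cu e _ _ f(1,2)] by blast
  qed
qed

lemma one_open:
  assumes sg: "simple_graph V E" and tf: "triangle_free E" and cu: "cubic V E"
    and val: "valid_labeling E \<Lambda>"
    and e: "e \<in> E" and f: "f \<in> E" "f \<noteq> e" "e \<inter> f \<noteq> {}"
  shows "card {d \<in> rc_edges E e. {e,f} \<in> d \<and> \<Lambda> d} = 1"
proof -
  define T where "T = {d \<in> rc_edges E e. {e,f} \<in> d}"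
  have cT: "card T = 2" unfolding T_def by (rule rc_at_card'[OF sg tf cu e f])
  have "{e,f} \<in> rc_verts E e" unfolding rc_verts_def using e f by (auto intro: le_intro)
  then obtain d1 d2 where d: "d1 \<in> T" "d2 \<in> T" "\<Lambda> d1 \<noteq> \<Lambda> d2"
    using val e unfolding valid_labeling_def T_def by blast
  then have "d1 \<noteq> d2" by blast
  then have TT: "T = {d1,d2}" using cT d(1,2) by (auto simp: card_2_iff)
  have "{d \<in> rc_edges E e. {e,f} \<in> d \<and> \<Lambda> d} = {d \<in> T. \<Lambda> d}" unfolding T_def by auto
  also have "\<dots> = (if \<Lambda> d1 then {d1} else {d2})" using TT d(3) by auto
  finally show ?thesis by simp
qed

lemma deg_open:
  assumes sg: "simple_graph V E" and tf: "triangle_free E" and cu: "cubic V E"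
    and val: "valid_labeling E \<Lambda>" and w: "w \<in> line_edges E"
  shows "card {d \<in> open_edges E \<Lambda>. w \<in> d} = 2"
proof -
  obtain e f where ef: "w = {e,f}" "e \<in> E" "f \<in> E" "e \<noteq> f" "e \<inter> f \<noteq> {}"
    using w unfolding line_edges_def by blast
  define A where "A = {d \<in> rc_edges E e. {e,f} \<in> d \<and> \<Lambda> d}"
  define B where "B = {d \<in> rc_edges E f. {f,e} \<in> d \<and> \<Lambda> d}"
  have cA: "card A = 1" unfolding A_def using one_open[OF sg tf cu val ef(2,3)] ef by auto
  have cB: "card B = 1" unfolding B_def using one_open[OF sg tf cu val ef(3,2)] ef by (auto simp: Int_commute)
  have eq: "{d \<in> open_edges E \<Lambda>. w \<in> d} = A \<union> B"
  proof
    show "{d \<in> open_edges E \<Lambda>. w \<in> d} \<subseteq> A \<union> B"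
    proof
      fix d assume "d \<in> {d \<in> open_edges E \<Lambda>. w \<in> d}"
      then have d: "d \<in> l2_edges E" "\<Lambda> d" "w \<in> d" unfolding open_edges_def by auto
      obtain e' f' g' where c: "d = {{e',f'},{e',g'}}" "e' \<in> E" "f' \<in> E" "g' \<in> E" "e' \<noteq> f'" "e' \<noteq> g'" "f' \<noteq> g'"
        "e' \<inter> f' \<noteq> {}" "e' \<inter> g' \<noteq> {}" "f' \<inter> g' = {}" using l2_char[OF d(1)] by blast
      have "e' = e \<or> e' = f" using d(3) c(1) ef(1) by (auto simp: doubleton_eq_iff)
      moreover have "{e',f'} \<in> line_edges E" "{e',g'} \<in> line_edges E" using c by (auto intro: le_intro)
      ultimately have "d \<subseteq> rc_verts E e \<or> d \<subseteq> rc_verts E f" using c(1) unfolding rc_verts_def by auto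
      then show "d \<in> A \<union> B" unfolding A_def B_def rc_edges_def using d ef(1) by (auto simp: insert_commute)
    qed
  next
    show "A \<union> B \<subseteq> {d \<in> open_edges E \<Lambda>. w \<in> d}"
      unfolding A_def B_def open_edges_def rc_edges_def using ef(1) by (auto simp: insert_commute)
  qed
  have disj: "A \<inter> B = {}"
  proof (rule ccontr)
    assume "A \<inter> B \<noteq> {}"
    then obtain d where "d \<in> A" "d \<in> B" by blast
    then have d: "d \<in> l2_edges E" "d \<subseteq> rc_verts E e" "d \<subseteq> rc_verts E f"
      unfolding A_def B_def rc_edges_def by auto
    obtain e' f' g' where c: "d = {{e',f'},{e',g'}}" "e' \<in> E" "f' \<in> E" "g' \<in> E" "e' \<noteq> f'" "e' \<noteq> g'" "f' \<noteq> g'"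
      "e' \<inter> f' \<noteq> {}" "e' \<inter> g' \<noteq> {}" "f' \<inter> g' = {}" using l2_char[OF d(1)] by blast
    have "e \<in> {e',f'}" "f \<in> {e',f'}" "e \<in> {e',g'}" "f \<in> {e',g'}" using d(2,3) c(1) unfolding rc_verts_def by auto
    then show False using ef(4) c(7) by auto
  qed
  have "finite A" "finite B" using cA cB by (auto intro: card_ge_0_finite)
  then show ?thesis using eq disj cA cB by (simp add: card_Un_disjoint)
qed




lemma card3_split: "card S = 3 \<Longrightarrow> b \<in> S \<Longrightarrow> \<exists>f1 f2. S = {b,f1,f2} \<and> b \<noteq> f1 \<and> b \<noteq> f2 \<and> f1 \<noteq> f2"
proof -
  assume "card S = 3" "b \<in> S"
  then obtain x y z where S: "S = {x,y,z}" "x \<noteq> y" "y \<noteq> z" "x \<noteq> z" by (auto simp: card_3_iff)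
  then consider "b = x" | "b = y" | "b = z" using \<open>b \<in> S\<close> by blast
  then show ?thesis
  proof cases
    case 1 then show ?thesis using S by blast
  next
    case 2 then have "S = {b,x,z}" using S by auto
    then show ?thesis using S 2 by blast
  next
    case 3 then have "S = {b,x,y}" using S by auto
    then show ?thesis using S 3 by blast
  qed
qed

lemma corner_S:
  assumes sg: "simple_graph V E" and e: "e \<in> E" and f: "f \<in> E" "e \<noteq> f" and p: "p \<in> e" "p \<in> f"
  shows "(\<exists>w. P w \<and> (\<forall>x\<in>{e,f}. w \<in> x)) \<longleftrightarrow> P p"
proof -
  have wp: "w = p" if "w \<in> e" "w \<in> f" for w
  proof (rule ccontr)
    assume "w \<noteq> p"
    obtain a b where "e = {a,b}" "a \<noteq> b" using edge2[OF sg e] by blast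
    then have "e = {p,w}" using p that \<open>w \<noteq> p\<close> by auto
    moreover obtain c d where "f = {c,d}" "c \<noteq> d" using edge2[OF sg f(1)] by blast
    then have "f = {p,w}" using p that \<open>w \<noteq> p\<close> by auto
    ultimately show False using f(2) by simp
  qed
  show ?thesis
  proof
    assume "\<exists>w. P w \<and> (\<forall>x\<in>{e,f}. w \<in> x)"
    then obtain w where "P w" "w \<in> e" "w \<in> f" by blast
    then show "P p" using wp by blast
  next
    assume "P p"
    then show "\<exists>w. P w \<and> (\<forall>x\<in>{e,f}. w \<in> x)" using p by blast
  qed
qed

lemma l2_obtain:
  assumes "d \<in> l2_edges E"
  obtains e f g where "d = {{e,f},{e,g}}" "e \<in> E" "f \<in> E" "g \<in> E" "e \<noteq> f" "e \<noteq> g" "f \<noteq> g"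
     "e \<inter> f \<noteq> {}" "e \<inter> g \<noteq> {}" "f \<inter> g = {}"
  using l2_char[OF assms] by blast

lemma edge_eq: "simple_graph V E \<Longrightarrow> e \<in> E \<Longrightarrow> u \<in> e \<Longrightarrow> v \<in> e \<Longrightarrow> u \<noteq> v \<Longrightarrow> e = {u,v}"
proof -
  assume a: "simple_graph V E" "e \<in> E" "u \<in> e" "v \<in> e" "u \<noteq> v"
  then obtain p q where "e = {p,q}" using edge2 by blast
  then show "e = {u,v}" using a(3-5) by auto
qed

lemma reach_sub:
  assumes "reach F a c" "\<And>y z. reach F a y \<Longrightarrow> {y,z} \<in> F \<Longrightarrow> {y,z} \<in> G"
  shows "reach G a c"
  using assms unfolding reach_def by (induction rule: rtranclp_induct) (auto intro: rtranclp.rtrancl_into_rtrancl)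

lemma core:
  assumes fin: "finite V" and sg: "simple_graph V E" and tf: "triangle_free E" and cu: "cubic V E"
    and val: "valid_labeling E \<Lambda>" and br: "is_bridge E b"
    and b: "b = {u,v}" "u \<noteq> v"
    and Su: "{h\<in>E. u \<in> h} = {b,f1,f2}" "b \<noteq> f1" "b \<noteq> f2" "f1 \<noteq> f2"
    and Sv: "{h\<in>E. v \<in> h} = {b,g1,g2}" "b \<noteq> g1" "b \<noteq> g2" "g1 \<noteq> g2"
    and L: "\<Lambda> {{b,f1},{b,g1}}" "\<Lambda> {{b,f2},{b,g2}}" "\<not> \<Lambda> {{b,g1},{b,f2}}" "\<not> \<Lambda> {{b,g2},{b,f1}}"
  shows "\<exists>\<gamma>\<in>Gamma E \<Lambda>. typeA_self_intersection E \<Lambda> b \<gamma>"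
proof -
  have bE: "b \<in> E" using br unfolding is_bridge_def by blast
  have nr: "\<not> reach (E - {b}) u v" using br b unfolding is_bridge_def by blast
  have EV: "E \<subseteq> Pow V"
  proof
    fix e assume "e \<in> E"
    then obtain p q where "e = {p,q}" "p \<in> V" "q \<in> V" using edge2[OF sg] by blast
    then show "e \<in> Pow V" by simp
  qed
  have finE: "finite E" using finite_subset[OF EV] fin by simp
  have fm: "f1 \<in> {h\<in>E. u \<in> h}" "f2 \<in> {h\<in>E. u \<in> h}" using Su(1) by simp_all
  have gm: "g1 \<in> {h\<in>E. v \<in> h}" "g2 \<in> {h\<in>E. v \<in> h}" using Sv(1) by simp_all
  have fE: "f1 \<in> E" "f2 \<in> E" "u \<in> f1" "u \<in> f2" using fm by simp_all
  have gE: "g1 \<in> E" "g2 \<in> E" "v \<in> g1" "v \<in> g2" using gm by simp_all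
  have vf: "v \<notin> f1" "v \<notin> f2"
    using edge_eq[OF sg fE(1) fE(3) _ b(2)] edge_eq[OF sg fE(2) fE(4) _ b(2)] Su(2,3) b(1) by auto
  have ug: "u \<notin> g1" "u \<notin> g2"
    using edge_eq[OF sg gE(1) _ gE(3) b(2)] edge_eq[OF sg gE(2) _ gE(4) b(2)] Sv(2,3) b(1) by auto
  have bb: "b = {v,u}" "v \<noteq> u" using b by auto
  have Nv: "{g\<in>E. v \<in> g} - {b} = {g1,g2}" using Sv by auto
  have Nu: "{g\<in>E. u \<in> g} - {b} = {f1,f2}" using Su by auto
  have rc1: "{d \<in> rc_edges E b. {b,f1} \<in> d} = {{{b,f1},{b,g1}},{{b,f1},{b,g2}}}"
    using rc_at[OF sg tf bE b fE(1) Su(2)[symmetric] fE(3)] unfolding Nv by simp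
  have rc2: "{d \<in> rc_edges E b. {b,f2} \<in> d} = {{{b,f2},{b,g1}},{{b,f2},{b,g2}}}"
    using rc_at[OF sg tf bE b fE(2) Su(3)[symmetric] fE(4)] unfolding Nv by simp
  have rc3: "{d \<in> rc_edges E b. {b,g1} \<in> d} = {{{b,g1},{b,f1}},{{b,g1},{b,f2}}}"
    using rc_at[OF sg tf bE bb gE(1) Sv(2)[symmetric] gE(3)] unfolding Nu by simp
  have rc4: "{d \<in> rc_edges E b. {b,g2} \<in> d} = {{{b,g2},{b,f1}},{{b,g2},{b,f2}}}"
    using rc_at[OF sg tf bE bb gE(2) Sv(3)[symmetric] gE(4)] unfolding Nu by simp
  define x1 where "x1 = {b,f1}"
  define x2 where "x2 = {b,g1}"
  define x3 where "x3 = {b,f2}"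
  define x4 where "x4 = {b,g2}"
  have fg: "f1 \<noteq> g1" "f1 \<noteq> g2" "f2 \<noteq> g1" "f2 \<noteq> g2" using fE ug by auto
  have dist: "distinct [x1,x2,x3,x4]" unfolding x1_def x2_def x3_def x4_def
    using fg Su Sv by (auto simp: doubleton_eq_iff)
  have rv: "rc_verts E b = {x1,x2,x3,x4}"
  proof
    show "rc_verts E b \<subseteq> {x1,x2,x3,x4}"
    proof
      fix l assume "l \<in> rc_verts E b"
      then have l: "l \<in> line_edges E" "b \<in> l" unfolding rc_verts_def by auto
      then obtain h where h: "l = {b,h}" using pick_other[OF l(2) l(1)] by blast
      then have hh: "b \<noteq> h" "b \<inter> h \<noteq> {}" "h \<in> E" using le_mem[of b h E] l(1) by auto
      then have "u \<in> h \<or> v \<in> h" using b by auto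
      then have "h \<in> {h\<in>E. u \<in> h} \<or> h \<in> {h\<in>E. v \<in> h}" using hh(3) by simp
      then have "h \<in> {b,f1,f2} \<or> h \<in> {b,g1,g2}" unfolding Su(1) Sv(1) .
      then have "h = f1 \<or> h = f2 \<or> h = g1 \<or> h = g2" using hh(1) by simp
      then show "l \<in> {x1,x2,x3,x4}" unfolding x1_def x2_def x3_def x4_def using h by (elim disjE) simp_all
    qed
  next
    have "b \<inter> f1 \<noteq> {}" "b \<inter> f2 \<noteq> {}" "b \<inter> g1 \<noteq> {}" "b \<inter> g2 \<noteq> {}" using fE gE b by auto
    then have "x1 \<in> line_edges E" "x2 \<in> line_edges E" "x3 \<in> line_edges E" "x4 \<in> line_edges E"
      unfolding x1_def x2_def x3_def x4_def using le_intro[OF bE] fE gE Su Sv by auto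
    then show "{x1,x2,x3,x4} \<subseteq> rc_verts E b" unfolding rc_verts_def
      unfolding x1_def x2_def x3_def x4_def by simp
  qed
  have r1: "{d \<in> rc_edges E b. x1 \<in> d} = {{x1,x2},{x4,x1}}"
  proof -
    have "{x1,x4} = {x4,x1}" by blast
    then show ?thesis using rc1 unfolding x1_def x2_def x3_def x4_def by simp
  qed
  have r2: "{d \<in> rc_edges E b. x3 \<in> d} = {{x2,x3},{x3,x4}}"
  proof -
    have "{x3,x2} = {x2,x3}" by blast
    then show ?thesis using rc2 unfolding x1_def x2_def x3_def x4_def by simp
  qed
  have r3: "{d \<in> rc_edges E b. x2 \<in> d} = {{x1,x2},{x2,x3}}"
  proof -
    have "{x2,x1} = {x1,x2}" by blast
    then show ?thesis using rc3 unfolding x1_def x2_def x3_def x4_def by simp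
  qed
  have r4: "{d \<in> rc_edges E b. x4 \<in> d} = {{x4,x1},{x3,x4}}"
  proof -
    have "{x4,x3} = {x3,x4}" by blast
    then show ?thesis using rc4 unfolding x1_def x2_def x3_def x4_def by simp
  qed
  have re: "rc_edges E b = {{x1,x2},{x2,x3},{x3,x4},{x4,x1}}"
  proof
    show "rc_edges E b \<subseteq> {{x1,x2},{x2,x3},{x3,x4},{x4,x1}}"
    proof
      fix d assume d: "d \<in> rc_edges E b"
      then have "d \<in> line_edges (line_edges E)" "d \<subseteq> rc_verts E b" unfolding rc_edges_def l2_edges_def by auto
      then obtain y where y: "y \<in> d" "y \<in> {x1,x2,x3,x4}" using leE[of d "line_edges E"] unfolding rv by blast
      then have "d \<in> {d \<in> rc_edges E b. x1 \<in> d} \<or> d \<in> {d \<in> rc_edges E b. x2 \<in> d} \<or>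
                 d \<in> {d \<in> rc_edges E b. x3 \<in> d} \<or> d \<in> {d \<in> rc_edges E b. x4 \<in> d}" using d by auto
      then show "d \<in> {{x1,x2},{x2,x3},{x3,x4},{x4,x1}}" unfolding r1 r2 r3 r4
        by (simp only: insert_iff empty_iff simp_thms) (elim disjE; simp only: simp_thms)
    qed
  next
    have "{x1,x2} \<in> {d \<in> rc_edges E b. x1 \<in> d}" "{x4,x1} \<in> {d \<in> rc_edges E b. x1 \<in> d}"
      "{x2,x3} \<in> {d \<in> rc_edges E b. x3 \<in> d}" "{x3,x4} \<in> {d \<in> rc_edges E b. x3 \<in> d}"
      unfolding r1 r2 by simp_all
    then show "{{x1,x2},{x2,x3},{x3,x4},{x4,x1}} \<subseteq> rc_edges E b" by simp
  qed
  have L': "\<Lambda> {x1,x2}" "\<Lambda> {x3,x4}" "\<not> \<Lambda> {x2,x3}" "\<not> \<Lambda> {x4,x1}"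
    using L unfolding x1_def x2_def x3_def x4_def by auto
  define Op where "Op = open_edges E \<Lambda>"
  define R where "R = {{x1,x2},{x3,x4}}"
  define H where "H = Op - R"
  have rcl2: "rc_edges E b \<subseteq> l2_edges E" unfolding rc_edges_def by auto
  have x12O: "{x1,x2} \<in> Op" and x34O: "{x3,x4} \<in> Op"
    using re rcl2 L' unfolding Op_def open_edges_def by auto
  have finO: "finite Op"
  proof -
    have "line_edges E \<subseteq> Pow E" unfolding line_edges_def by auto
    then have "finite (line_edges E)" using finE by (meson finite_Pow_iff finite_subset)
    moreover have "line_edges (line_edges E) \<subseteq> Pow (line_edges E)" unfolding line_edges_def by auto
    ultimately have "finite (line_edges (line_edges E))" by (meson finite_Pow_iff finite_subset)
    moreover have "Op \<subseteq> line_edges (line_edges E)" unfolding Op_def open_edges_def l2_edges_def by auto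
    ultimately show ?thesis by (rule finite_subset[rotated])
  qed
  have finH: "finite H" unfolding H_def using finO by simp
  have Hl2: "d \<in> l2_edges E" if "d \<in> H" for d using that unfolding H_def Op_def open_edges_def by auto
  have two: "\<exists>a c. d = {a,c} \<and> a \<noteq> c" if "d \<in> H" for d
  proof -
    have "d \<in> line_edges (line_edges E)" using Hl2[OF that] unfolding l2_edges_def by simp
    from leE[OF this] show ?thesis by blast
  qed
  have Hle: "y \<in> line_edges E" if "d \<in> H" "y \<in> d" for d y
  proof -
    have "d \<in> line_edges (line_edges E)" using Hl2[OF that(1)] unfolding l2_edges_def by simp
    from leE[OF this] obtain a c where "d = {a,c}" "a \<in> line_edges E" "c \<in> line_edges E" by blast
    then show ?thesis using that(2) by blast
  qed
  have degO: "card {d \<in> Op. y \<in> d} = 2" if "y \<in> line_edges E" for y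
    unfolding Op_def by (rule deg_open[OF sg tf cu val that])
  have "x1 \<in> rc_verts E b" "x2 \<in> rc_verts E b" unfolding rv by simp_all
  then have x1le: "x1 \<in> line_edges E" "x2 \<in> line_edges E" unfolding rc_verts_def by simp_all
  have nx: "x1 \<notin> {x3,x4}" "x2 \<notin> {x3,x4}" using dist by simp_all
  have dg1: "dg H x1 = 1"
  proof -
    have "{d \<in> H. x1 \<in> d} = {d \<in> Op. x1 \<in> d} - {{x1,x2}}" unfolding H_def R_def using nx by auto
    then show ?thesis unfolding dg_def using degO[OF x1le(1)] x12O finO by (simp add: card_Diff_singleton)
  qed
  have dg2: "dg H x2 = 1"
  proof -
    have "{d \<in> H. x2 \<in> d} = {d \<in> Op. x2 \<in> d} - {{x1,x2}}" unfolding H_def R_def using nx by auto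
    then show ?thesis unfolding dg_def using degO[OF x1le(2)] x12O finO by (simp add: card_Diff_singleton)
  qed
  have dgo: "dg H y = 2" if "y \<in> line_edges E" "y \<notin> {x1,x2,x3,x4}" for y
  proof -
    have "{d \<in> H. y \<in> d} = {d \<in> Op. y \<in> d}" unfolding H_def R_def using that(2) by auto
    then show ?thesis unfolding dg_def using degO[OF that(1)] by simp
  qed
  define S where "S = (\<lambda>l. \<exists>w. reach (E - {b}) u w \<and> (\<forall>x\<in>l. w \<in> x))"
  have Sc: "S {e,f} \<longleftrightarrow> reach (E - {b}) u p" if "e \<in> E" "f \<in> E" "e \<noteq> f" "p \<in> e" "p \<in> f" for e f p
    unfolding S_def by (rule corner_S[OF sg that])
  have ub: "u \<in> b" "v \<in> b" using b by simp_all
  have S1: "S x1" "S x3" unfolding x1_def x3_def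
    using Sc[OF bE fE(1) Su(2) ub(1) fE(3)] Sc[OF bE fE(2) Su(3) ub(1) fE(4)] reach_refl by simp_all
  have S2: "\<not> S x2" "\<not> S x4" unfolding x2_def x4_def
    using Sc[OF bE gE(1) Sv(2) ub(2) gE(3)] Sc[OF bE gE(2) Sv(3) ub(2) gE(4)] nr by simp_all
  have Sedge: "S a = S c" if "{a,c} \<in> H" for a c
  proof -
    have dH: "{a,c} \<in> H" by (rule that)
    obtain e f g where c: "{a,c} = {{e,f},{e,g}}" "e \<in> E" "f \<in> E" "g \<in> E" "e \<noteq> f" "e \<noteq> g" "f \<noteq> g"
        "e \<inter> f \<noteq> {}" "e \<inter> g \<noteq> {}" "f \<inter> g = {}" by (rule l2_obtain[OF Hl2[OF dH]])
    have lef: "{e,f} \<in> line_edges E" by (rule le_intro[OF c(2) c(3) c(5) c(8)])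
    have leg: "{e,g} \<in> line_edges E" by (rule le_intro[OF c(2) c(4) c(6) c(9)])
    have "e \<noteq> b"
    proof
      assume "e = b"
      then have "{a,c} \<subseteq> rc_verts E b" unfolding c(1) rc_verts_def using lef leg by simp
      then have m: "{a,c} \<in> rc_edges E b" using Hl2[OF dH] unfolding rc_edges_def by simp
      have nR: "{a,c} \<noteq> {x1,x2}" "{a,c} \<noteq> {x3,x4}" "\<Lambda> {a,c}"
        using dH unfolding H_def R_def Op_def open_edges_def by simp_all
      from m[unfolded re] nR L'(3,4) show False
        by (simp only: insert_iff empty_iff simp_thms) (elim disjE; simp only: simp_thms)
    qed
    obtain p q where pq: "e = {p,q}" "p \<noteq> q" using edge2[OF sg c(2)] by blast
    have pq1: "{p,q} \<in> E - {b}" and pq2: "{q,p} \<in> E - {b}" using c(2) \<open>e \<noteq> b\<close> pq(1) by (simp_all add: insert_commute)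
    have rpq: "reach (E - {b}) p q" "reach (E - {b}) q p"
      using reach_step[OF reach_refl pq1] reach_step[OF reach_refl pq2] by simp_all
    have pe: "p \<in> e" "q \<in> e" using pq(1) by simp_all
    have "(p \<in> f \<and> q \<in> g) \<or> (q \<in> f \<and> p \<in> g)" using c(8-10) pq(1) by blast
    then have "S {e,f} = S {e,g}"
    proof
      assume h: "p \<in> f \<and> q \<in> g"
      have "S {e,f} = reach (E - {b}) u p" using Sc[OF c(2) c(3) c(5) pe(1)] h by simp
      moreover have "S {e,g} = reach (E - {b}) u q" using Sc[OF c(2) c(4) c(6) pe(2)] h by simp
      moreover have "reach (E - {b}) u p = reach (E - {b}) u q" using reach_trans[OF _ rpq(1), of u] reach_trans[OF _ rpq(2), of u] by blast
      ultimately show ?thesis by simp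
    next
      assume h: "q \<in> f \<and> p \<in> g"
      have "S {e,f} = reach (E - {b}) u q" using Sc[OF c(2) c(3) c(5) pe(2)] h by simp
      moreover have "S {e,g} = reach (E - {b}) u p" using Sc[OF c(2) c(4) c(6) pe(1)] h by simp
      moreover have "reach (E - {b}) u p = reach (E - {b}) u q" using reach_trans[OF _ rpq(1), of u] reach_trans[OF _ rpq(2), of u] by blast
      ultimately show ?thesis by simp
    qed
    moreover have "(a = {e,f} \<and> c = {e,g}) \<or> (a = {e,g} \<and> c = {e,f})" using c(1) by (simp add: doubleton_eq_iff)
    ultimately show ?thesis by auto
  qed
  have Sreach: "reach H a c \<Longrightarrow> S a = S c" for a c
    unfolding reach_def by (induction rule: rtranclp_induct) (auto dest: Sedge)
  have HO: "H \<subseteq> Op" unfolding H_def by auto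
  have r13: "reach H x1 x3"
  proof -
    have "odd (dg H x1)" using dg1 by simp
    then obtain y where y: "y \<noteq> x1" "reach H x1 y" "odd (dg H y)"
      using parity[OF finH two] by blast
    obtain d where "d \<in> H" "y \<in> d" using reach_last[OF y(2) y(1)] by blast
    then have yl: "y \<in> line_edges E" by (rule Hle)
    have "y \<in> {x1,x2,x3,x4}"
    proof (rule ccontr)
      assume "y \<notin> {x1,x2,x3,x4}"
      then have "dg H y = 2" by (rule dgo[OF yl])
      then show False using y(3) by simp
    qed
    then have "y = x1 \<or> y = x2 \<or> y = x3 \<or> y = x4" by simp
    moreover have "S y" using Sreach[OF y(2)] S1(1) by simp
    ultimately have "y = x3" using y(1) S2 by (elim disjE) simp_all
    then show ?thesis using y(2) by simp
  qed
  have r24: "reach H x2 x4"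
  proof -
    have "odd (dg H x2)" using dg2 by simp
    then obtain y where y: "y \<noteq> x2" "reach H x2 y" "odd (dg H y)"
      using parity[OF finH two] by blast
    obtain d where "d \<in> H" "y \<in> d" using reach_last[OF y(2) y(1)] by blast
    then have yl: "y \<in> line_edges E" by (rule Hle)
    have "y \<in> {x1,x2,x3,x4}"
    proof (rule ccontr)
      assume "y \<notin> {x1,x2,x3,x4}"
      then have "dg H y = 2" by (rule dgo[OF yl])
      then show False using y(3) by simp
    qed
    then have "y = x1 \<or> y = x2 \<or> y = x3 \<or> y = x4" by simp
    moreover have "\<not> S y" using Sreach[OF y(2)] S2(1) by simp
    ultimately have "y = x4" using y(1) S1 by (elim disjE) simp_all
    then show ?thesis using y(2) by simp
  qed
  define \<gamma> where "\<gamma> = {d \<in> Op. \<exists>w\<in>d. reach Op x1 w}"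
  have ex1: "\<exists>d\<in>Op. x1 \<in> d" using x12O by (intro bexI[of _ "{x1,x2}"]) simp_all
  have gG: "\<gamma> \<in> Gamma E \<Lambda>" unfolding Gamma_def components_def \<gamma>_def Op_def[symmetric]
    using ex1 by (intro CollectI exI[of _ x1] conjI refl)
  have lift: "reach (\<gamma> - R) y0 y" if h: "reach Op x1 y0" "reach H y0 y" for y0 y
  proof (rule reach_sub[OF h(2)])
    fix y z assume hy: "reach H y0 y" "{y,z} \<in> H"
    have "reach Op x1 y" using h(1) reach_mono[OF hy(1) HO] by (rule reach_trans)
    then show "{y,z} \<in> \<gamma> - R" using hy(2) unfolding \<gamma>_def H_def by blast
  qed
  have rO12: "reach Op x1 x2" using reach_step[OF reach_refl x12O] .
  have g12: "{x1,x2} \<in> \<gamma>" unfolding \<gamma>_def mem_Collect_eq using x12O reach_refl[of Op x1] by simp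
  have r13O: "reach Op x1 x3" using reach_mono[OF r13 HO] .
  have g34: "{x3,x4} \<in> \<gamma>" unfolding \<gamma>_def mem_Collect_eq using x34O r13O by simp
  have t1: "reach (\<gamma> - {{x1,x2},{x3,x4}}) x1 x3" using lift[OF reach_refl r13] unfolding R_def .
  have t2: "reach (\<gamma> - {{x1,x2},{x3,x4}}) x2 x4" using lift[OF rO12 r24] unfolding R_def .
  have "typeA_self_intersection E \<Lambda> b \<gamma>" unfolding typeA_self_intersection_def
    apply (rule exI[of _ x1], rule exI[of _ x2], rule exI[of _ x3], rule exI[of _ x4])
    using dist rv re L'(1,2) g12 g34 t1 t2 by (intro conjI)
  then show ?thesis using gG by (rule bexI)
qed




lemma card3_obt:
  assumes "card S = 3" "b \<in> S"
  obtains f1 f2 where "S = {b,f1,f2}" "b \<noteq> f1" "b \<noteq> f2" "f1 \<noteq> f2"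
  using card3_split[OF assms] by blast

lemma two_diff:
  assumes "card {d \<in> R. x \<in> d \<and> \<Lambda> d} = 1" "{d \<in> R. x \<in> d} = {A,B}" "A \<noteq> B"
  shows "\<Lambda> A \<noteq> \<Lambda> B"
proof
  assume eq: "\<Lambda> A = \<Lambda> B"
  have "{d \<in> R. x \<in> d \<and> \<Lambda> d} = {d \<in> {A,B}. \<Lambda> d}" using assms(2) by blast
  also have "\<dots> = (if \<Lambda> A then {A,B} else {})" using eq by auto
  finally show False using assms(1,3) by (simp split: if_splits)
qed

lemma core2:
  assumes fin: "finite V" and sg: "simple_graph V E" and tf: "triangle_free E" and cu: "cubic V E"
    and val: "valid_labeling E \<Lambda>" and br: "is_bridge E b"
    and b: "b = {u,v}" "u \<noteq> v"
    and Su: "{h\<in>E. u \<in> h} = {b,f1,f2}" "b \<noteq> f1" "b \<noteq> f2" "f1 \<noteq> f2"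
    and Sv: "{h\<in>E. v \<in> h} = {b,g1,g2}" "b \<noteq> g1" "b \<noteq> g2" "g1 \<noteq> g2"
  shows "\<exists>\<gamma>\<in>Gamma E \<Lambda>. typeA_self_intersection E \<Lambda> b \<gamma>"
proof -
  have bE: "b \<in> E" using br unfolding is_bridge_def by blast
  have fm: "f1 \<in> {h\<in>E. u \<in> h}" "f2 \<in> {h\<in>E. u \<in> h}" using Su(1) by simp_all
  have gm: "g1 \<in> {h\<in>E. v \<in> h}" "g2 \<in> {h\<in>E. v \<in> h}" using Sv(1) by simp_all
  have fE: "f1 \<in> E" "f2 \<in> E" "u \<in> f1" "u \<in> f2" using fm by simp_all
  have gE: "g1 \<in> E" "g2 \<in> E" "v \<in> g1" "v \<in> g2" using gm by simp_all
  have bb: "b = {v,u}" "v \<noteq> u" using b by auto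
  have Nv: "{g\<in>E. v \<in> g} - {b} = {g1,g2}" using Sv by auto
  have Nu: "{g\<in>E. u \<in> g} - {b} = {f1,f2}" using Su by auto
  have rc1: "{d \<in> rc_edges E b. {b,f1} \<in> d} = {{{b,f1},{b,g1}},{{b,f1},{b,g2}}}"
    using rc_at[OF sg tf bE b fE(1) Su(2)[symmetric] fE(3)] unfolding Nv by simp
  have rc2: "{d \<in> rc_edges E b. {b,f2} \<in> d} = {{{b,f2},{b,g1}},{{b,f2},{b,g2}}}"
    using rc_at[OF sg tf bE b fE(2) Su(3)[symmetric] fE(4)] unfolding Nv by simp
  have rc3: "{d \<in> rc_edges E b. {b,g1} \<in> d} = {{{b,g1},{b,f1}},{{b,g1},{b,f2}}}"
    using rc_at[OF sg tf bE bb gE(1) Sv(2)[symmetric] gE(3)] unfolding Nu by simp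
  have i: "b \<inter> f1 \<noteq> {}" "b \<inter> f2 \<noteq> {}" "b \<inter> g1 \<noteq> {}" using b fE gE by auto
  have o1: "card {d \<in> rc_edges E b. {b,f1} \<in> d \<and> \<Lambda> d} = 1"
    by (rule one_open[OF sg tf cu val bE fE(1) Su(2)[symmetric] i(1)])
  have o2: "card {d \<in> rc_edges E b. {b,f2} \<in> d \<and> \<Lambda> d} = 1"
    by (rule one_open[OF sg tf cu val bE fE(2) Su(3)[symmetric] i(2)])
  have o3: "card {d \<in> rc_edges E b. {b,g1} \<in> d \<and> \<Lambda> d} = 1"
    by (rule one_open[OF sg tf cu val bE gE(1) Sv(2)[symmetric] i(3)])
  have n1: "{{b,f1},{b,g1}} \<noteq> {{b,f1},{b,g2}}" using Sv by (simp add: doubleton_eq_iff)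
  have n2: "{{b,f2},{b,g1}} \<noteq> {{b,f2},{b,g2}}" using Sv by (simp add: doubleton_eq_iff)
  have n3: "{{b,g1},{b,f1}} \<noteq> {{b,g1},{b,f2}}" using Su by (simp add: doubleton_eq_iff)
  have A1: "\<Lambda> {{b,f1},{b,g1}} \<noteq> \<Lambda> {{b,f1},{b,g2}}" by (rule two_diff[OF o1 rc1 n1])
  have A2: "\<Lambda> {{b,f2},{b,g1}} \<noteq> \<Lambda> {{b,f2},{b,g2}}" by (rule two_diff[OF o2 rc2 n2])
  have A3: "\<Lambda> {{b,g1},{b,f1}} \<noteq> \<Lambda> {{b,g1},{b,f2}}" by (rule two_diff[OF o3 rc3 n3])
  have c1: "{{b,g1},{b,f1}} = {{b,f1},{b,g1}}" "{{b,g2},{b,f1}} = {{b,f1},{b,g2}}"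
    "{{b,g1},{b,f2}} = {{b,f2},{b,g1}}" "{{b,g2},{b,f2}} = {{b,f2},{b,g2}}" by (simp_all add: insert_commute)
  show ?thesis
  proof (cases "\<Lambda> {{b,f1},{b,g1}}")
    case True
    have L: "\<Lambda> {{b,f1},{b,g1}}" "\<Lambda> {{b,f2},{b,g2}}" "\<not> \<Lambda> {{b,g1},{b,f2}}" "\<not> \<Lambda> {{b,g2},{b,f1}}"
      using True A1 A2 A3 unfolding c1 by auto
    show ?thesis by (rule core[OF fin sg tf cu val br b Su Sv L])
  next
    case False
    have L: "\<Lambda> {{b,f1},{b,g2}}" "\<Lambda> {{b,f2},{b,g1}}" "\<not> \<Lambda> {{b,g2},{b,f2}}" "\<not> \<Lambda> {{b,g1},{b,f1}}"
      using False A1 A2 A3 unfolding c1 by auto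
    have Sv': "{h\<in>E. v \<in> h} = {b,g2,g1}" "b \<noteq> g2" "b \<noteq> g1" "g2 \<noteq> g1"
      using Sv by (auto simp: insert_commute)
    show ?thesis by (rule core[OF fin sg tf cu val br b Su Sv' L])
  qed
qed

theorem lemma2p18:
  fixes V :: "'a set" and E :: "'a set set"
  assumes "finite V"
    and "simple_graph V E"
    and "connected_graph V E"
    and "triangle_free E"
    and "cubic V E"
    and "\<exists>b. is_bridge E b"
  shows "\<forall>\<Lambda>. valid_labeling E \<Lambda> \<longrightarrow>
           (\<exists>e\<in>E. \<exists>\<gamma>\<in>Gamma E \<Lambda>. typeA_self_intersection E \<Lambda> e \<gamma>)"
proof (intro allI impI)
  fix \<Lambda> assume val: "valid_labeling E \<Lambda>"
  obtain b where br: "is_bridge E b" using assms(6) by blast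
  have bE: "b \<in> E" using br unfolding is_bridge_def by blast
  obtain u v where b: "b = {u,v}" "u \<noteq> v" "u \<in> V" "v \<in> V" using edge2[OF assms(2) bE] by blast
  have cu3: "card {h\<in>E. u \<in> h} = 3" using assms(5) b(3) unfolding cubic_def degree_def by blast
  have bu: "b \<in> {h\<in>E. u \<in> h}" using bE b(1) by simp
  obtain f1 f2 where Su: "{h\<in>E. u \<in> h} = {b,f1,f2}" "b \<noteq> f1" "b \<noteq> f2" "f1 \<noteq> f2"
    by (rule card3_obt[OF cu3 bu])
  have cv3: "card {h\<in>E. v \<in> h} = 3" using assms(5) b(4) unfolding cubic_def degree_def by blast
  have bv: "b \<in> {h\<in>E. v \<in> h}" using bE b(1) by simp
  obtain g1 g2 where Sv: "{h\<in>E. v \<in> h} = {b,g1,g2}" "b \<noteq> g1" "b \<noteq> g2" "g1 \<noteq> g2"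
    by (rule card3_obt[OF cv3 bv])
  have "\<exists>\<gamma>\<in>Gamma E \<Lambda>. typeA_self_intersection E \<Lambda> b \<gamma>"
    by (rule core2[OF assms(1,2,4,5) val br b(1,2) Su Sv])
  then show "\<exists>e\<in>E. \<exists>\<gamma>\<in>Gamma E \<Lambda>. typeA_self_intersection E \<Lambda> e \<gamma>" using bE by blast
qed


end
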